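(* Let $Q(z)$ be a $k\times k$ unimodular Hermite matrix of Laurent polynomials ($k\ge2$) whose $(1,1)$-entry $Q_{1,1}(z)$ is identically zero. Then there exist a $k\times k$ unimodular matrix $U(z)$ of Laurent polynomials and a $(k-1)\times(k-1)$ matrix $\widetilde Q(z)$ of Laurent polynomials such that $$Q(z)=U(z)\begin{bmatrix}1&\\&\widetilde Q(z)\end{bmatrix}U^\star(z).$$
   Context: For a matrix $U(z)=\sum_k U_k z^k$ of Laurent polynomials, $U^\star(z):=\sum_k\overline{U_k}^T z^{-k}$; Hermite means $A^\star=A$. A square matrix of Laurent polynomials is unimodular if its determinant is a nonzero monomial $cz^m$ ($c\ne0$, $m\in\mathbb{Z}$). *)

theory Defs
  imports "HOL-Computational_Algebra.Formal_Laurent_Series" "Jordan_Normal_Form.Determinant"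
begin

no_notation fls_nth (infixl \<open>$$\<close> 75)

text \<open>Laurent polynomials over the complex numbers are represented as formal Laurent
  series (type complex fls) with only finitely many nonzero coefficients.\<close>

definition laurent_poly :: "complex fls \<Rightarrow> bool" where
  "laurent_poly f \<longleftrightarrow> finite {n. fls_nth f n \<noteq> 0}"

definition lstar :: "complex fls \<Rightarrow> complex fls" where
  "lstar f = Abs_fls (\<lambda>n. cnj (fls_nth f (- n)))"

definition laurent_mat :: "complex fls mat \<Rightarrow> bool" where
  "laurent_mat A \<longleftrightarrow> (\<forall>i<dim_row A. \<forall>j<dim_col A. laurent_poly (A $$ (i, j)))"

definition mat_star :: "complex fls mat \<Rightarrow> complex fls mat" where
  "mat_star A = mat (dim_col A) (dim_row A) (\<lambda>(i, j). lstar (A $$ (j, i)))"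

definition hermite_lmat :: "complex fls mat \<Rightarrow> bool" where
  "hermite_lmat A \<longleftrightarrow> mat_star A = A"

definition unimodular_lmat :: "complex fls mat \<Rightarrow> bool" where
  "unimodular_lmat A \<longleftrightarrow> dim_row A = dim_col A \<and> laurent_mat A \<and>
     (\<exists>c::complex. \<exists>m::int. c \<noteq> 0 \<and> det A = fls_const c * fls_X_intpow m)"

end

theory Submission
  imports Defs
begin

section \<open>Laurent polynomials\<close>

definition supp :: "complex fls \<Rightarrow> int set" where
  "supp f = {n. fls_nth f n \<noteq> 0}"

lemma laurent_poly_supp: "laurent_poly f \<longleftrightarrow> finite (supp f)"
  by (simp add: laurent_poly_def supp_def)

lemma laurent_poly_0[simp]: "laurent_poly 0" by (simp add: laurent_poly_def)

lemma laurent_poly_const[simp]: "laurent_poly (fls_const c)"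
  unfolding laurent_poly_def by (rule finite_subset[of _ "{0}"]) auto

lemma laurent_poly_1[simp]: "laurent_poly 1"
  using laurent_poly_const[of 1] by simp

lemma laurent_poly_Xpow[simp]: "laurent_poly (fls_X_intpow i)"
  unfolding laurent_poly_def by (rule finite_subset[of _ "{i}"]) auto

lemma laurent_poly_shift[simp]: "laurent_poly f \<Longrightarrow> laurent_poly (fls_shift m f)"
proof -
  assume f: "laurent_poly f"
  have "{n. fls_nth (fls_shift m f) n \<noteq> 0} = (\<lambda>x. x + m) -` {n. fls_nth f n \<noteq> 0}" by auto
  moreover have "finite ((\<lambda>x. x + m) -` {n. fls_nth f n \<noteq> 0})"
    using f unfolding laurent_poly_def by (intro finite_vimageI) (auto simp: inj_on_def)
  ultimately show ?thesis unfolding laurent_poly_def by simp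
qed

lemma laurent_poly_add[simp]: "laurent_poly f \<Longrightarrow> laurent_poly g \<Longrightarrow> laurent_poly (f + g)"
  unfolding laurent_poly_def
  by (rule finite_subset[of _ "{n. fls_nth f n \<noteq> 0} \<union> {n. fls_nth g n \<noteq> 0}"]) auto

lemma laurent_poly_uminus[simp]: "laurent_poly f \<Longrightarrow> laurent_poly (- f)"
  unfolding laurent_poly_def by simp

lemma laurent_poly_diff[simp]: "laurent_poly f \<Longrightarrow> laurent_poly g \<Longrightarrow> laurent_poly (f - g)"
  using laurent_poly_add[of f "-g"] by simp

lemma fls_times_nth_supp:
  fixes f g :: "complex fls"
  assumes S: "finite S" "{i. fls_nth f i \<noteq> 0} \<subseteq> S"
  shows "fls_nth (f*g) n = (\<Sum>i\<in>S. fls_nth f i * fls_nth g (n-i))"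
proof -
  define df where "df = fls_subdegree f"
  define dg where "dg = fls_subdegree g"
  have hard: "fls_nth f i * fls_nth g (n - i) = 0" if i: "i \<notin> {df..n - dg}" for i
  proof (cases "fls_nth f i = 0")
    case False
    then have "df \<le> i" unfolding df_def by (rule fls_subdegree_leI)
    with i have "n - i < dg" by auto
    then show ?thesis unfolding dg_def using fls_eq0_below_subdegree[of "n-i" g] by simp
  qed simp
  have "fls_nth (f*g) n = (\<Sum>i=df..n - dg. fls_nth f i * fls_nth g (n - i))"
    unfolding df_def dg_def by (rule fls_times_nth(2))
  also have "\<dots> = (\<Sum>i\<in>S \<union> {df..n-dg}. fls_nth f i * fls_nth g (n - i))"
    by (rule sum.mono_neutral_left) (use S hard in auto)
  also have "\<dots> = (\<Sum>i\<in>S. fls_nth f i * fls_nth g (n - i))"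
  proof (rule sum.mono_neutral_right)
    show "\<forall>i\<in>S \<union> {df..n - dg} - S. fls_nth f i * fls_nth g (n - i) = 0"
      using S by auto
  qed (use S in auto)
  finally show ?thesis .
qed

lemma laurent_poly_mult[simp]:
  assumes f: "laurent_poly f" and g: "laurent_poly g"
  shows "laurent_poly (f * g)"
proof -
  let ?S = "{n. fls_nth f n \<noteq> 0}" and ?T = "{n. fls_nth g n \<noteq> 0}"
  have "{n. fls_nth (f*g) n \<noteq> 0} \<subseteq> (\<lambda>(i,j). i + j) ` (?S \<times> ?T)"
  proof
    fix n assume "n \<in> {n. fls_nth (f*g) n \<noteq> 0}"
    then have "(\<Sum>i\<in>?S. fls_nth f i * fls_nth g (n-i)) \<noteq> 0"
      using fls_times_nth_supp[of ?S f g n] f by (simp add: laurent_poly_def)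
    then obtain i where "i \<in> ?S" "fls_nth f i * fls_nth g (n-i) \<noteq> 0"
      by (meson sum.neutral)
    then have "(i, n - i) \<in> ?S \<times> ?T" by auto
    then show "n \<in> (\<lambda>(i,j). i + j) ` (?S \<times> ?T)" by force
  qed
  moreover have "finite ((\<lambda>(i,j). i + j) ` (?S \<times> ?T))"
    using f g by (simp add: laurent_poly_def)
  ultimately show ?thesis unfolding laurent_poly_def by (rule finite_subset)
qed

lemma laurent_poly_sum[simp]: "(\<And>x. x \<in> A \<Longrightarrow> laurent_poly (f x)) \<Longrightarrow> laurent_poly (\<Sum>x\<in>A. f x)"
  by (induction A rule: infinite_finite_induct) auto

lemma laurent_poly_prod[simp]: "(\<And>x. x \<in> A \<Longrightarrow> laurent_poly (f x)) \<Longrightarrow> laurent_poly (\<Prod>x\<in>A. f x)"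
  by (induction A rule: infinite_finite_induct) auto

lemma laurent_poly_power[simp]: "laurent_poly f \<Longrightarrow> laurent_poly (f ^ n)"
  by (induction n) auto

section \<open>Para-conjugation\<close>

lemma lstar_nth:
  assumes "laurent_poly f"
  shows "fls_nth (lstar f) n = cnj (fls_nth f (- n))"
proof -
  have "finite {n::nat. cnj (fls_nth f (- (- int n))) \<noteq> 0}"
  proof -
    have "{n::nat. cnj (fls_nth f (- (- int n))) \<noteq> 0} = int -` {n. fls_nth f n \<noteq> 0}" by auto
    moreover have "finite (int -` {n. fls_nth f n \<noteq> 0})"
      using assms unfolding laurent_poly_def by (intro finite_vimageI) (auto simp: inj_on_def)
    ultimately show ?thesis by simp
  qed
  then show ?thesis unfolding lstar_def
    by (subst nth_Abs_fls_finite_nonzero_neg_nth) auto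
qed

lemma laurent_poly_lstar[simp]: "laurent_poly f \<Longrightarrow> laurent_poly (lstar f)"
proof -
  assume f: "laurent_poly f"
  have "{n. fls_nth (lstar f) n \<noteq> 0} = uminus ` {n. fls_nth f n \<noteq> 0}"
    using f by (force simp: lstar_nth)
  then show ?thesis using f unfolding laurent_poly_def by simp
qed

lemma lstar_lstar[simp]: "laurent_poly f \<Longrightarrow> lstar (lstar f) = f"
  by (intro fls_eqI) (simp add: lstar_nth)

lemma lstar_add[simp]: "laurent_poly f \<Longrightarrow> laurent_poly g \<Longrightarrow> lstar (f + g) = lstar f + lstar g"
  by (intro fls_eqI) (simp add: lstar_nth)

lemma lstar_uminus[simp]: "laurent_poly f \<Longrightarrow> lstar (- f) = - lstar f"
  by (intro fls_eqI) (simp add: lstar_nth)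

lemma lstar_diff[simp]: "laurent_poly f \<Longrightarrow> laurent_poly g \<Longrightarrow> lstar (f - g) = lstar f - lstar g"
  by (intro fls_eqI) (simp add: lstar_nth)

lemma lstar_const[simp]: "lstar (fls_const c) = fls_const (cnj c)"
  by (intro fls_eqI) (simp add: lstar_nth)

lemma lstar_0[simp]: "lstar 0 = 0"
  using lstar_const[of 0] by simp

lemma lstar_1[simp]: "lstar 1 = 1"
  using lstar_const[of 1] by simp

lemma lstar_mult[simp]:
  assumes f: "laurent_poly f" and g: "laurent_poly g"
  shows "lstar (f * g) = lstar f * lstar g"
proof (rule fls_eqI)
  fix n
  let ?S = "{n. fls_nth f n \<noteq> 0}"
  have S: "finite ?S" using f by (simp add: laurent_poly_def)
  have e: "\<And>x::int. - x - n = - n - x" by simp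
  have U: "{j. fls_nth (lstar f) j \<noteq> 0} \<subseteq> uminus ` ?S"
  proof
    fix j assume "j \<in> {j. fls_nth (lstar f) j \<noteq> 0}"
    then have "-j \<in> ?S" using f by (simp add: lstar_nth)
    then show "j \<in> uminus ` ?S" by (metis image_eqI minus_minus)
  qed
  have "fls_nth (lstar (f * g)) n = cnj (\<Sum>i\<in>?S. fls_nth f i * fls_nth g (- n - i))"
    using f g by (simp add: lstar_nth fls_times_nth_supp[OF S])
  also have "\<dots> = (\<Sum>i\<in>?S. cnj (fls_nth f i) * cnj (fls_nth g (- n - i)))"
    by simp
  also have "\<dots> = (\<Sum>j\<in>uminus ` ?S. fls_nth (lstar f) j * fls_nth (lstar g) (n - j))"
    using f g by (subst sum.reindex) (auto simp: lstar_nth inj_on_def e intro!: sum.cong)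
  also have "\<dots> = fls_nth (lstar f * lstar g) n"
    using f S U by (subst fls_times_nth_supp[of "uminus ` ?S"]) (auto simp: lstar_nth)
  finally show "fls_nth (lstar (f * g)) n = fls_nth (lstar f * lstar g) n" .
qed

lemma lstar_sum: "(\<And>x. x \<in> A \<Longrightarrow> laurent_poly (f x)) \<Longrightarrow> lstar (\<Sum>x\<in>A. f x) = (\<Sum>x\<in>A. lstar (f x))"
  by (induction A rule: infinite_finite_induct) auto

section \<open>Matrices\<close>

lemma mat_star_dim[simp]: "dim_row (mat_star A) = dim_col A" "dim_col (mat_star A) = dim_row A"
  by (simp_all add: mat_star_def)

lemma mat_star_carrier[simp]: "A \<in> carrier_mat n m \<Longrightarrow> mat_star A \<in> carrier_mat m n"
  by (metis carrier_matD carrier_matI mat_star_dim)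

lemma mat_star_index[simp]: "i < dim_col A \<Longrightarrow> j < dim_row A \<Longrightarrow> mat_star A $$ (i,j) = lstar (A $$ (j,i))"
  by (simp add: mat_star_def)

lemma laurent_matD: "laurent_mat A \<Longrightarrow> i < dim_row A \<Longrightarrow> j < dim_col A \<Longrightarrow> laurent_poly (A $$ (i,j))"
  by (simp add: laurent_mat_def)

lemma laurent_matI: "(\<And>i j. i < dim_row A \<Longrightarrow> j < dim_col A \<Longrightarrow> laurent_poly (A $$ (i,j))) \<Longrightarrow> laurent_mat A"
  by (simp add: laurent_mat_def)

lemma laurent_mat_star[simp]: "laurent_mat A \<Longrightarrow> laurent_mat (mat_star A)"
  by (rule laurent_matI) (auto dest: laurent_matD)

lemma mat_star_star[simp]: "laurent_mat A \<Longrightarrow> mat_star (mat_star A) = A"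
  by (rule eq_matI) (auto dest: laurent_matD)

lemma laurent_mat_mult[simp]:
  assumes "laurent_mat A" "laurent_mat B" "dim_col A = dim_row B"
  shows "laurent_mat (A * B)"
proof (rule laurent_matI)
  fix i j assume i: "i < dim_row (A * B)" and j: "j < dim_col (A * B)"
  have L: "laurent_poly (A $$ (i,k) * B $$ (k,j))" if "k \<in> {0..<dim_row B}" for k
    using assms i j that by (auto intro!: laurent_poly_mult intro: laurent_matD)
  have "(A * B) $$ (i,j) = (\<Sum>k\<in>{0..<dim_row B}. A $$ (i,k) * B $$ (k,j))"
    using i j assms by (simp add: scalar_prod_def)
  moreover have "laurent_poly (\<Sum>k\<in>{0..<dim_row B}. A $$ (i,k) * B $$ (k,j))"
    by (rule laurent_poly_sum) (rule L)
  ultimately show "laurent_poly ((A * B) $$ (i,j))" by simp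
qed

lemma mat_star_mult:
  assumes A: "laurent_mat A" and B: "laurent_mat B" and d: "dim_col A = dim_row B"
  shows "mat_star (A * B) = mat_star B * mat_star A"
proof (rule eq_matI)
  fix i j assume i: "i < dim_row (mat_star B * mat_star A)" and j: "j < dim_col (mat_star B * mat_star A)"
  have LA: "laurent_poly (A $$ (j,k))" if "k \<in> {0..<dim_row B}" for k
    using A d i j that by (auto intro: laurent_matD)
  have LB: "laurent_poly (B $$ (k,i))" if "k \<in> {0..<dim_row B}" for k
    using B d i j that by (auto intro: laurent_matD)
  have "mat_star (A * B) $$ (i, j) = lstar (\<Sum>k\<in>{0..<dim_row B}. A $$ (j,k) * B $$ (k,i))"
    using i j d by (simp add: scalar_prod_def)
  also have "\<dots> = (\<Sum>k\<in>{0..<dim_row B}. lstar (A $$ (j,k) * B $$ (k,i)))"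
    by (rule lstar_sum) (use LA LB in auto)
  also have "\<dots> = (\<Sum>k\<in>{0..<dim_row B}. lstar (B $$ (k,i)) * lstar (A $$ (j,k)))"
    by (rule sum.cong) (use LA LB in \<open>auto simp: mult.commute\<close>)
  also have "\<dots> = (mat_star B * mat_star A) $$ (i, j)"
    using i j d by (simp add: scalar_prod_def)
  finally show "mat_star (A * B) $$ (i, j) = (mat_star B * mat_star A) $$ (i, j)" .
qed auto

lemma mat_star_one[simp]: "mat_star (1\<^sub>m n) = 1\<^sub>m n"
  by (rule eq_matI) auto

lemma laurent_mat_one[simp]: "laurent_mat (1\<^sub>m n)"
  by (rule laurent_matI) auto

lemma laurent_mat_smult[simp]: "laurent_poly a \<Longrightarrow> laurent_mat A \<Longrightarrow> laurent_mat (a \<cdot>\<^sub>m A)"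
  by (rule laurent_matI) (auto dest: laurent_matD)

lemma laurent_poly_signof[simp]: "laurent_poly (signof p)"
  by (simp add: sign_def)

lemma laurent_det[simp]:
  assumes A: "laurent_mat A" shows "laurent_poly (det A)"
proof (cases "dim_row A = dim_col A")
  case True
  have "laurent_poly (signof p * (\<Prod>i = 0..<dim_row A. A $$ (i, p i)))"
    if p: "p permutes {0..<dim_row A}" for p
  proof -
    have "laurent_poly (A $$ (i, p i))" if i: "i \<in> {0..<dim_row A}" for i
    proof -
      have "p i \<in> {0..<dim_row A}" using permutes_in_image[OF p] i by simp
      then show ?thesis using i True A by (auto intro: laurent_matD)
    qed
    then show ?thesis by (intro laurent_poly_mult laurent_poly_prod laurent_poly_signof)
  qed
  then show ?thesis unfolding det_def using True by (auto intro: laurent_poly_sum)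
qed (simp add: det_def)

lemma laurent_mat_delete[simp]: "laurent_mat A \<Longrightarrow> laurent_mat (mat_delete A i j)"
  by (rule laurent_matI) (auto simp: mat_delete_def intro!: laurent_matD)

lemma laurent_adj[simp]: "laurent_mat A \<Longrightarrow> laurent_mat (adj_mat A)"
  by (rule laurent_matI) (auto simp: adj_mat_def cofactor_def)

lemma if0_mult: "(if b then x else 0) * y = (if b then x * y else (0::'a::mult_zero))"
  "y * (if b then x else 0) = (if b then y * x else (0::'a::mult_zero))" by auto

lemma prod_list_diag_one:
  assumes "\<And>i. i < dim_row A \<Longrightarrow> A $$ (i,i) = (1::'a::monoid_mult)"
  shows "prod_list (diag_mat A) = 1"
proof -
  have "diag_mat A = map (\<lambda>i. 1) [0..<dim_row A]"
    unfolding diag_mat_def using assms by (intro map_cong) auto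
  then show ?thesis by (simp add: map_replicate_const)
qed

theorem lemma4p3:
  fixes Q :: "complex fls mat" and k :: nat
  assumes "k \<ge> 2"
    and "Q \<in> carrier_mat k k"
    and "unimodular_lmat Q"
    and "hermite_lmat Q"
    and "Q $$ (0, 0) = 0"
  shows "\<exists>U Qt. U \<in> carrier_mat k k \<and> unimodular_lmat U \<and>
           Qt \<in> carrier_mat (k - 1) (k - 1) \<and> laurent_mat Qt \<and>
           Q = U * four_block_mat (1\<^sub>m 1) (0\<^sub>m 1 (k - 1)) (0\<^sub>m (k - 1) 1) Qt * mat_star U"
proof -
  have k0: "0 < k" using assms(1) by simp
  have Qc: "Q \<in> carrier_mat k k" by (rule assms(2))
  have Q00: "Q $$ (0,0) = 0" by (rule assms(5))
  have LQ: "laurent_mat Q" using assms(3) by (simp add: unimodular_lmat_def)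
  have LQe: "\<And>i j. i < k \<Longrightarrow> j < k \<Longrightarrow> laurent_poly (Q $$ (i,j))"
    using LQ Qc by (auto intro: laurent_matD)
  obtain c mm where c: "c \<noteq> 0" and dQ: "det Q = fls_const c * fls_X_intpow mm"
    using assms(3) by (auto simp: unimodular_lmat_def)
  have HQ: "mat_star Q = Q" using assms(4) by (simp add: hermite_lmat_def)
  have HQe: "\<And>i j. i < k \<Longrightarrow> j < k \<Longrightarrow> lstar (Q $$ (i,j)) = Q $$ (j,i)"
  proof -
    fix i j assume "i < k" "j < k"
    then have "mat_star Q $$ (j,i) = lstar (Q $$ (i,j))" using Qc by simp
    then show "lstar (Q $$ (i,j)) = Q $$ (j,i)" using HQ by simp
  qed
  define dinv where "dinv = fls_const (1/c) * fls_X_intpow (-mm)"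
  have Ldinv: "laurent_poly dinv" unfolding dinv_def by simp
  have dd: "dinv * det Q = 1"
  proof -
    have "dinv * det Q = (fls_const (1/c) * fls_const c) * (fls_X_intpow (-mm) * fls_X_intpow mm)"
      by (simp add: dinv_def dQ ac_simps)
    also have "\<dots> = 1" using c by (simp add: fls_X_intpow_times_conv_shift)
    finally show ?thesis .
  qed
  define R where "R = dinv \<cdot>\<^sub>m adj_mat Q"
  have adjc: "adj_mat Q \<in> carrier_mat k k" using adj_mat(1)[OF Qc] .
  have Rc: "R \<in> carrier_mat k k" unfolding R_def using adjc by simp
  have LR: "laurent_mat R" unfolding R_def using Ldinv LQ by simp
  have LRe: "\<And>i j. i < k \<Longrightarrow> j < k \<Longrightarrow> laurent_poly (R $$ (i,j))"
    using LR Rc by (auto intro: laurent_matD)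
  have QR: "Q * R = 1\<^sub>m k"
  proof -
    have "Q * R = dinv \<cdot>\<^sub>m (Q * adj_mat Q)" unfolding R_def by (rule mult_smult_distrib[OF Qc adjc])
    also have "\<dots> = dinv \<cdot>\<^sub>m (det Q \<cdot>\<^sub>m 1\<^sub>m k)" using adj_mat(2)[OF Qc] by simp
    also have "\<dots> = 1\<^sub>m k" by (rule eq_matI) (auto simp: dd mult.assoc[symmetric])
    finally show ?thesis .
  qed
  have RQ: "R * Q = 1\<^sub>m k"
  proof -
    have "R * Q = dinv \<cdot>\<^sub>m (adj_mat Q * Q)" unfolding R_def by (rule mult_smult_assoc_mat[OF adjc Qc])
    also have "\<dots> = dinv \<cdot>\<^sub>m (det Q \<cdot>\<^sub>m 1\<^sub>m k)" using adj_mat(3)[OF Qc] by simp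
    also have "\<dots> = 1\<^sub>m k" by (rule eq_matI) (auto simp: dd mult.assoc[symmetric])
    finally show ?thesis .
  qed
  have HR: "mat_star R = R"
  proof -
    have "mat_star R * Q = 1\<^sub>m k"
      using mat_star_mult[OF LQ LR] QR HQ Qc Rc by simp
    have SRc: "mat_star R \<in> carrier_mat k k" using Rc by simp
    have "(mat_star R * Q) * R = mat_star R * (Q * R)" by (rule assoc_mult_mat[OF SRc Qc Rc])
    then have "mat_star R = (mat_star R * Q) * R" using QR right_mult_one_mat[OF SRc] by simp
    also have "\<dots> = R" using \<open>mat_star R * Q = 1\<^sub>m k\<close> Rc by simp
    finally show ?thesis .
  qed
  define \<rho> where "\<rho> = R $$ (0,0)"
  have L\<rho>: "laurent_poly \<rho>" unfolding \<rho>_def using LRe k0 by simp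
  have H\<rho>: "lstar \<rho> = \<rho>"
  proof -
    have "mat_star R $$ (0,0) = lstar (R $$ (0,0))" using Rc k0 by simp
    then show ?thesis using HR by (simp add: \<rho>_def)
  qed
  define t where "t = fls_const (1/2) * (1 - \<rho>)"
  have Lt: "laurent_poly t" unfolding t_def using L\<rho> by simp
  have Ht: "lstar t = t" unfolding t_def using L\<rho> H\<rho> by simp
  have t2: "t + t = 1 - \<rho>"
  proof -
    have "t + t = (fls_const (1/2) + fls_const (1/2)) * (1 - \<rho>)" unfolding t_def by (simp add: ring_distribs)
    also have "fls_const (1/2) + fls_const (1/2) = (1 :: complex fls)"
      by (rule fls_eqI) auto
    finally show ?thesis by simp
  qed
  have QRe: "\<And>j. j < k \<Longrightarrow> (\<Sum>a = 0..<k. Q $$ (0,a) * R $$ (a,j)) = (if j = 0 then 1 else 0)"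
  proof -
    fix j assume j: "j < k"
    have "(Q * R) $$ (0,j) = (\<Sum>a = 0..<k. Q $$ (0,a) * R $$ (a,j))"
      using Qc Rc k0 j by (simp add: scalar_prod_def)
    then show "(\<Sum>a = 0..<k. Q $$ (0,a) * R $$ (a,j)) = (if j = 0 then 1 else 0)"
      using QR j k0 by simp
  qed
  have RQe: "(\<Sum>a = 0..<k. R $$ (0,a) * Q $$ (a,0)) = 1"
  proof -
    have "(R * Q) $$ (0,0) = (\<Sum>a = 0..<k. R $$ (0,a) * Q $$ (a,0))"
      using Qc Rc k0 by (simp add: scalar_prod_def)
    then show ?thesis using RQ k0 by simp
  qed
  define n where "n = (\<lambda>a. t * Q $$ (a,0))"
  define m where "m = (\<lambda>a. (if a = 0 then 1 else 0) + n a)"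
  define s where "s = (\<lambda>j. R $$ (0,j) + (if j = 0 then t else 0))"
  define s' where "s' = (\<lambda>j. if j = 0 then 0 else s j)"
  have n0: "n 0 = 0" by (simp add: n_def Q00)
  have s'0: "s' 0 = 0" by (simp add: s'_def)
  have Ln: "\<And>a. a < k \<Longrightarrow> laurent_poly (n a)" using Lt LQe k0 by (simp add: n_def)
  have Lm: "\<And>a. a < k \<Longrightarrow> laurent_poly (m a)" using Ln by (simp add: m_def)
  have Ls: "\<And>j. j < k \<Longrightarrow> laurent_poly (s j)" using Lt LRe k0 by (simp add: s_def)
  have Ls': "\<And>j. j < k \<Longrightarrow> laurent_poly (s' j)" using Ls by (simp add: s'_def)
  have Hm: "\<And>a. a < k \<Longrightarrow> lstar (m a) = (if a = 0 then 1 else 0) + t * Q $$ (0,a)"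
  proof -
    fix a assume a: "a < k"
    have "lstar (m a) = lstar (if a = 0 then 1 else 0) + lstar (t * Q $$ (a,0))"
      unfolding m_def n_def using a k0 Lt LQe by (subst lstar_add) auto
    also have "\<dots> = (if a = 0 then 1 else 0) + t * Q $$ (0,a)"
      using a k0 Lt LQe Ht HQe by (simp add: lstar_mult)
    finally show "lstar (m a) = (if a = 0 then 1 else 0) + t * Q $$ (0,a)" .
  qed
  have sdef: "\<And>j. j < k \<Longrightarrow> (\<Sum>a = 0..<k. lstar (m a) * R $$ (a,j)) = s j"
  proof -
    fix j assume j: "j < k"
    have "(\<Sum>a = 0..<k. lstar (m a) * R $$ (a,j))
        = (\<Sum>a = 0..<k. (if a = 0 then R $$ (a,j) else 0) + t * (Q $$ (0,a) * R $$ (a,j)))"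
      by (rule sum.cong) (auto simp: Hm ring_distribs)
    also have "\<dots> = R $$ (0,j) + t * (\<Sum>a = 0..<k. Q $$ (0,a) * R $$ (a,j))"
      using k0 by (simp add: sum.distrib sum_distrib_left)
    also have "\<dots> = s j" using QRe[OF j] by (simp add: s_def)
    finally show "(\<Sum>a = 0..<k. lstar (m a) * R $$ (a,j)) = s j" .
  qed
  have key: "(\<Sum>c = 0..<k. s c * m c) = 1"
  proof -
    have "(\<Sum>c = 0..<k. s c * m c)
        = (\<Sum>c = 0..<k. (if c = 0 then R $$ (c,c) + t + t * t * Q $$ (c,0) else 0) + t * (R $$ (0,c) * Q $$ (c,0)))"
      by (rule sum.cong) (auto simp: s_def m_def n_def ring_distribs)
    also have "\<dots> = \<rho> + t + t * (\<Sum>c = 0..<k. R $$ (0,c) * Q $$ (c,0))"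
      using k0 by (simp add: sum.distrib sum_distrib_left Q00 \<rho>_def)
    also have "\<dots> = 1" using RQe t2 by simp
    finally show ?thesis .
  qed
  define G where "G = mat k k (\<lambda>(i,j). (if i = j then 1 else 0) + (if j = 0 then n i else 0))"
  define Gi where "Gi = mat k k (\<lambda>(i,j). (if i = j then 1 else 0) - (if j = 0 then n i else 0))"
  define T where "T = mat k k (\<lambda>(i,j). (if i = j then 1 else 0) - (if i = 0 then s' j else 0))"
  define Ti where "Ti = mat k k (\<lambda>(i,j). (if i = j then 1 else 0) + (if i = 0 then s' j else 0))"
  have Gc: "G \<in> carrier_mat k k" by (simp add: G_def)
  have Gic: "Gi \<in> carrier_mat k k" by (simp add: Gi_def)
  have Tc: "T \<in> carrier_mat k k" by (simp add: T_def)
  have Tic: "Ti \<in> carrier_mat k k" by (simp add: Ti_def)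
  have LG: "laurent_mat G" by (rule laurent_matI) (auto simp: G_def Ln)
  have LGi: "laurent_mat Gi" by (rule laurent_matI) (auto simp: Gi_def Ln)
  have LT: "laurent_mat T" by (rule laurent_matI) (auto simp: T_def Ls')
  have LTi: "laurent_mat Ti" by (rule laurent_matI) (auto simp: Ti_def Ls')
  have GGi: "G * Gi = 1\<^sub>m k"
    by (rule eq_matI) (auto simp: G_def Gi_def scalar_prod_def ring_distribs sum.distrib sum_subtractf if0_mult n0)
  have TTi: "T * Ti = 1\<^sub>m k"
    by (rule eq_matI) (auto simp: T_def Ti_def scalar_prod_def ring_distribs sum.distrib sum_subtractf if0_mult s'0)
  define M where "M = G * T"
  define Mi where "Mi = Ti * Gi"
  have Mc: "M \<in> carrier_mat k k" using Gc Tc by (simp add: M_def)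
  have Mic: "Mi \<in> carrier_mat k k" using Gic Tic by (simp add: Mi_def)
  have LM: "laurent_mat M" unfolding M_def using LG LT Gc Tc by simp
  have LMi: "laurent_mat Mi" unfolding Mi_def using LGi LTi Gic Tic by simp
  have MMi: "M * Mi = 1\<^sub>m k"
  proof -
    have TGc: "Ti * Gi \<in> carrier_mat k k" using Tic Gic by simp
    have "M * Mi = G * (T * (Ti * Gi))" unfolding M_def Mi_def by (rule assoc_mult_mat[OF Gc Tc TGc])
    also have "T * (Ti * Gi) = (T * Ti) * Gi" by (rule assoc_mult_mat[OF Tc Tic Gic, symmetric])
    also have "\<dots> = Gi" using TTi Gic by simp
    finally show ?thesis using GGi by simp
  qed
  have Me: "\<And>a j. a < k \<Longrightarrow> j < k \<Longrightarrow> M $$ (a,j) = (if j = 0 then m a else (if a = j then 1 else 0) - m a * s j)"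
    by (auto simp: M_def G_def T_def scalar_prod_def ring_distribs sum.distrib sum_subtractf if0_mult n0 s'_def m_def)
  define SM where "SM = mat_star M"
  have SMc: "SM \<in> carrier_mat k k" using Mc by (simp add: SM_def)
  have LSM: "laurent_mat SM" using LM by (simp add: SM_def)
  define B where "B = SM * R * M"
  have SRc: "SM * R \<in> carrier_mat k k" using SMc Rc by simp
  have Bc: "B \<in> carrier_mat k k" using SRc Mc by (simp add: B_def)
  have LSR: "laurent_mat (SM * R)" using LSM LR SMc Rc by simp
  have LB: "laurent_mat B" unfolding B_def by (rule laurent_mat_mult[OF LSR LM]) (use Rc Mc in simp)
  have SRe: "\<And>c. c < k \<Longrightarrow> (SM * R) $$ (0,c) = s c"
  proof -
    fix c assume c: "c < k"
    have "(SM * R) $$ (0,c) = (\<Sum>a = 0..<k. lstar (M $$ (a,0)) * R $$ (a,c))"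
      using c k0 Mc Rc by (simp add: SM_def scalar_prod_def)
    also have "\<dots> = (\<Sum>a = 0..<k. lstar (m a) * R $$ (a,c))"
      by (rule sum.cong) (simp_all add: Me k0)
    also have "\<dots> = s c" using sdef[OF c] .
    finally show "(SM * R) $$ (0,c) = s c" .
  qed
  have B0: "\<And>j. j < k \<Longrightarrow> B $$ (0,j) = (if j = 0 then 1 else 0)"
  proof -
    fix j assume j: "j < k"
    have "B $$ (0,j) = (\<Sum>c = 0..<k. (SM * R) $$ (0,c) * M $$ (c,j))"
      unfolding B_def by (subst index_mult_mat) (use j k0 SRc Mc in \<open>auto simp: scalar_prod_def carrier_matD[OF SRc] carrier_matD[OF SMc] carrier_matD[OF Rc] intro!: sum.cong\<close>)
    also have "\<dots> = (\<Sum>c = 0..<k. s c * M $$ (c,j))"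
      by (rule sum.cong) (simp_all add: SRe)
    also have "\<dots> = (if j = 0 then 1 else 0)"
    proof (cases "j = 0")
      case True
      then show ?thesis using key by (simp add: Me)
    next
      case False
      have "(\<Sum>c = 0..<k. s c * M $$ (c,j)) = (\<Sum>c = 0..<k. (if c = j then s c else 0) - (s c * m c) * s j)"
        by (rule sum.cong) (auto simp: Me j False ring_distribs)
      also have "\<dots> = s j - (\<Sum>c = 0..<k. s c * m c) * s j"
        using j by (simp add: sum_subtractf sum_distrib_right)
      also have "\<dots> = 0" using key by simp
      finally show ?thesis using False by simp
    qed
    finally show "B $$ (0,j) = (if j = 0 then 1 else 0)" .
  qed
  have HB: "mat_star B = B"
  proof -
    have "mat_star B = mat_star M * mat_star (SM * R)"
      unfolding B_def by (rule mat_star_mult[OF LSR LM]) (use Rc Mc in simp)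
    also have "mat_star (SM * R) = mat_star R * mat_star SM"
      by (rule mat_star_mult[OF LSM LR]) (use SMc Rc in simp)
    also have "\<dots> = R * M" using HR LM by (simp add: SM_def)
    finally have "mat_star B = SM * (R * M)" by (simp add: SM_def)
    then show ?thesis unfolding B_def using SMc Rc Mc by simp
  qed
  have Bi0: "\<And>i. 0 < i \<Longrightarrow> i < k \<Longrightarrow> B $$ (i,0) = 0"
  proof -
    fix i assume i: "0 < i" "i < k"
    have "mat_star B $$ (i,0) = lstar (B $$ (0,i))" using Bc i by simp
    then show "B $$ (i,0) = 0" using HB B0 i by simp
  qed
  define Qt where "Qt = mat (k-1) (k-1) (\<lambda>(i,j). B $$ (Suc i, Suc j))"
  have Qtc: "Qt \<in> carrier_mat (k-1) (k-1)" by (simp add: Qt_def)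
  have LQt: "laurent_mat Qt"
    by (rule laurent_matI) (use LB Bc in \<open>auto simp: Qt_def intro!: laurent_matD\<close>)
  have FB: "four_block_mat (1\<^sub>m 1) (0\<^sub>m 1 (k-1)) (0\<^sub>m (k-1) 1) Qt = B"
  proof (rule eq_matI)
    fix i j assume i: "i < dim_row B" and j: "j < dim_col B"
    then have ik: "i < k" and jk: "j < k" using Bc by auto
    show "four_block_mat (1\<^sub>m 1) (0\<^sub>m 1 (k-1)) (0\<^sub>m (k-1) 1) Qt $$ (i, j) = B $$ (i, j)"
      using ik jk k0 B0 Bi0 by (auto simp: Qt_def)
  qed (use Bc k0 Qtc in auto)
  define N where "N = mat_star Mi"
  have Nc: "N \<in> carrier_mat k k" using Mic by (simp add: N_def)
  have LN: "laurent_mat N" using LMi by (simp add: N_def)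
  define U where "U = Q * N"
  have Uc: "U \<in> carrier_mat k k" using Qc Nc by (simp add: U_def)
  have LU: "laurent_mat U" unfolding U_def by (rule laurent_mat_mult[OF LQ LN]) (use Qc Nc in simp)
  have NSM: "N * SM = 1\<^sub>m k"
  proof -
    have "mat_star (M * Mi) = mat_star Mi * mat_star M"
      by (rule mat_star_mult[OF LM LMi]) (use Mc Mic in simp)
    then show ?thesis using MMi by (simp add: N_def SM_def)
  qed
  have SU: "mat_star U = Mi * Q"
  proof -
    have "mat_star U = mat_star N * mat_star Q"
      unfolding U_def by (rule mat_star_mult[OF LQ LN]) (use Qc Nc in simp)
    then show ?thesis using HQ LMi by (simp add: N_def)
  qed
  have detN: "det N = 1"
  proof -
    have "N = mat_star Gi * mat_star Ti"
      unfolding N_def Mi_def by (rule mat_star_mult[OF LTi LGi]) (use Tic Gic in simp)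
    moreover have "det (mat_star Gi) = 1"
    proof -
      have "det (mat_star Gi) = prod_list (diag_mat (mat_star Gi))"
      proof (rule det_upper_triangular[where n=k])
        show "upper_triangular (mat_star Gi)"
          unfolding upper_triangular_def using Gic by (auto simp: Gi_def)
      qed (use Gic in simp)
      also have "\<dots> = 1"
        by (rule prod_list_diag_one) (use Gic n0 in \<open>auto simp: Gi_def\<close>)
      finally show ?thesis .
    qed
    moreover have "det (mat_star Ti) = 1"
    proof -
      have "det (mat_star Ti) = prod_list (diag_mat (mat_star Ti))"
      proof (rule det_lower_triangular[where n=k])
        show "\<And>i j. i < j \<Longrightarrow> j < k \<Longrightarrow> mat_star Ti $$ (i, j) = 0"
          using Tic by (auto simp: Ti_def)
      qed (use Tic in simp)
      also have "\<dots> = 1"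
        by (rule prod_list_diag_one) (use Tic s'0 in \<open>auto simp: Ti_def\<close>)
      finally show ?thesis .
    qed
    ultimately show ?thesis using det_mult[of "mat_star Gi" k "mat_star Ti"] Gic Tic by simp
  qed
  have detU: "det U = det Q" unfolding U_def using det_mult[OF Qc Nc] detN by simp
  have UU: "unimodular_lmat U"
    unfolding unimodular_lmat_def using Uc LU detU dQ c by auto
  have eq: "U * B * (Mi * Q) = Q"
  proof -
    have MiQc: "Mi * Q \<in> carrier_mat k k" using Mic Qc by simp
    have e1: "M * (Mi * Q) = Q"
    proof -
      have "M * (Mi * Q) = (M * Mi) * Q" by (rule assoc_mult_mat[OF Mc Mic Qc, symmetric])
      then show ?thesis using MMi Qc by simp
    qed
    have e2: "B * (Mi * Q) = SM"
    proof -
      have "B * (Mi * Q) = (SM * R) * (M * (Mi * Q))"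
        unfolding B_def by (rule assoc_mult_mat[OF SRc Mc MiQc])
      also have "\<dots> = SM * (R * Q)" using e1 assoc_mult_mat[OF SMc Rc Qc] by simp
      also have "\<dots> = SM" using RQ right_mult_one_mat[OF SMc] by simp
      finally show ?thesis .
    qed
    have "U * B * (Mi * Q) = U * (B * (Mi * Q))" by (rule assoc_mult_mat[OF Uc Bc MiQc])
    also have "\<dots> = Q * N * SM" using e2 by (simp add: U_def)
    also have "\<dots> = Q * (N * SM)" by (rule assoc_mult_mat[OF Qc Nc SMc])
    also have "\<dots> = Q" using NSM right_mult_one_mat[OF Qc] by simp
    finally show ?thesis .
  qed
  show ?thesis
  proof (intro exI conjI)
    show "U \<in> carrier_mat k k" by (rule Uc)
    show "unimodular_lmat U" by (rule UU)
    show "Qt \<in> carrier_mat (k - 1) (k - 1)" by (rule Qtc)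
    show "laurent_mat Qt" by (rule LQt)
    show "Q = U * four_block_mat (1\<^sub>m 1) (0\<^sub>m 1 (k - 1)) (0\<^sub>m (k - 1) 1) Qt * mat_star U"
      using eq FB SU by simp
  qed
qed

end
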